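(* For the policy $\tt E^3$-$\tt TS$ with $\gamma_\beta=\lceil 8/\Delta_{\min}^2\rceil$, for every epoch $l\ge1$ and every arm $j>1$, $$\mathbb P\big(\theta_1(l)<\theta_j(l)\big)\le 4e^{-l}.$$
   Context: Single-player $N$-armed bandit: the rewards of arm $k$ are i.i.d. over time with support in $[0,1]$ and unknown mean $\mu_k$, independent across arms; arm 1 has the greatest mean and $\Delta_{\min}=\mu_1-\max_{j\ne1}\mu_j>0$. Policy $\tt E^3$-$\tt TS$ proceeds in epochs $l=1,2,\dots$; in the exploration phase of each epoch every arm is played $\gamma_\beta$ times. Counters $S_i,F_i$ start at $0$; for each exploration play of arm $i$ with reward $\tilde r$, an independent Bernoulli trial with success probability $\tilde r$ is performed, incrementing $S_i$ on success and $F_i$ otherwise. At the end of the exploration phase of epoch $l$, $\theta_i(l)$ is sampled (independently) from $\mathrm{Beta}(S_i+1,F_i+1)$ for each arm $i$, using the current counters (which are based on $\gamma_\beta l$ plays of arm $i$). (In the exploitation phase the arm $\arg\max_i\theta_i(l)$ is played for $2^l$ slots.) *)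

theory Defs
  imports "HOL-Probability.Probability"
begin

definition beta_density :: "real \<Rightarrow> real \<Rightarrow> real \<Rightarrow> real" where
  "beta_density a b x =
     (if 0 < x \<and> x < 1 then x powr (a - 1) * (1 - x) powr (b - 1) / Beta a b else 0)"

definition beta_measure :: "real \<Rightarrow> real \<Rightarrow> real measure" where
  "beta_measure a b = density lborel (\<lambda>x. ennreal (beta_density a b x))"

text \<open>One exploration play of an arm with reward distribution D: draw a reward r,
  then perform a Bernoulli trial with success probability r.\<close>
definition trial :: "real measure \<Rightarrow> bool measure" where
  "trial D = D \<bind> (\<lambda>r. measure_pmf (bernoulli_pmf r))"

definition success_count :: "real measure \<Rightarrow> nat \<Rightarrow> nat measure" where
  "success_count D n =
     distr (PiM {..<n} (\<lambda>_. trial D)) (count_space UNIV) (\<lambda>\<omega>. card {t \<in> {..<n}. \<omega> t})"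

definition ts_sample :: "real measure \<Rightarrow> nat \<Rightarrow> real measure" where
  "ts_sample D n = success_count D n \<bind> (\<lambda>s. beta_measure (real s + 1) (real (n - s) + 1))"

text \<open>Joint law of the samples theta_i(l), i = 1..N, at the end of the exploration phase of
  epoch l (each arm played gamma*l times, arms independent).\<close>
definition e3ts_thetas :: "nat \<Rightarrow> (nat \<Rightarrow> real measure) \<Rightarrow> nat \<Rightarrow> nat \<Rightarrow> (nat \<Rightarrow> real) measure" where
  "e3ts_thetas N D \<gamma> l = PiM {1..N} (\<lambda>i. ts_sample (D i) (\<gamma> * l))"

end

theory Submission
  imports Defs
begin


lemma binom_id1: "real (Suc n choose Suc k) * real (Suc k) = real (Suc n) * real (n choose k)"
  using Suc_times_binomial_eq[of n k] by (metis of_nat_mult mult.commute)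

lemma binom_id2: "real (Suc n choose Suc k) * real (n - k) = real (Suc n) * real (n choose Suc k)"
proof -
  have "(Suc n choose Suc k) * (n - k) = Suc n * (n choose Suc k)"
    using binomial_absorb_comp[of "Suc n" "Suc k"] by (simp add: mult.commute)
  then show ?thesis by (metis of_nat_mult)
qed

lemma F_deriv:
  "((\<lambda>y. \<Sum>k\<in>{s+1..s+1+d}. real ((s+1+d) choose k) * y^k * (1-y)^(s+1+d-k)) has_real_derivative
     real (s+1+d) * real ((s+d) choose s) * y^s * (1-y)^d) (at y)"
proof (induction d arbitrary: s)
  case 0
  show ?case
    apply (auto intro!: derivative_eq_intros)
    apply (cases s)
     apply (auto simp: algebra_simps)
    done
next
  case (Suc d)
  have IH: "((\<lambda>y. \<Sum>k\<in>{s+2..s+2+d}. real ((s+2+d) choose k) * y^k * (1-y)^(s+2+d-k)) has_real_derivative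
     real (s+2+d) * real ((s+1+d) choose (s+1)) * y^(s+1) * (1-y)^d) (at y)"
    using Suc.IH[of "s+1"] by (simp add: add.commute add.left_commute)
  have split: "{s+1..s+1+Suc d} = insert (s+1) {s+2..s+2+d}" by auto
  have eq: "(\<lambda>y. \<Sum>k\<in>{s+1..s+1+Suc d}. real ((s+1+Suc d) choose k) * y^k * (1-y)^(s+1+Suc d-k)) =
     (\<lambda>y. real ((s+2+d) choose (s+1)) * (y^(s+1) * (1-y)^(Suc d)) +
       (\<Sum>k\<in>{s+2..s+2+d}. real ((s+2+d) choose k) * y^k * (1-y)^(s+2+d-k)))"
    unfolding split by (auto simp: Suc_diff_le)
  have d1: "((\<lambda>y. y^(s+1)) has_real_derivative real (s+1) * y^s) (at y)"
    using DERIV_pow[of "s+1" y] by simp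
  have d2: "((\<lambda>y. (1-y)^(Suc d)) has_real_derivative - (real (Suc d) * (1-y)^d)) (at y)"
  proof -
    have m: "((\<lambda>y. 1 - y) has_real_derivative -1) (at y)"
      using DERIV_diff[OF DERIV_const DERIV_ident, of 1 y] by simp
    show ?thesis using DERIV_chain'[OF m DERIV_pow[of "Suc d" "1-y"]] by simp
  qed
  have D: "((\<lambda>y. real ((s+2+d) choose (s+1)) * (y^(s+1) * (1-y)^(Suc d))) has_real_derivative
      real ((s+2+d) choose (s+1)) * (real (s+1) * y^s * (1-y)^(Suc d) + (- (real (Suc d) * (1-y)^d)) * y^(s+1))) (at y)"
    by (intro DERIV_cmult DERIV_mult d1 d2)
  have b1: "real ((s+2+d) choose (s+1)) * real (s+1) = real (s+2+d) * real ((s+1+d) choose s)"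
    using binom_id1[of "s+1+d" s] by simp
  have b2: "real ((s+2+d) choose (s+1)) * real (Suc d) = real (s+2+d) * real ((s+1+d) choose (s+1))"
    using binom_id2[of "s+1+d" s] by simp
  have fin: "real ((s+2+d) choose (s+1)) * (real (s+1) * y^s * (1-y)^(Suc d) + (- (real (Suc d) * (1-y)^d)) * y^(s+1))
        + real (s+2+d) * real ((s+1+d) choose (s+1)) * y^(s+1) * (1-y)^d
      = real (s+1+Suc d) * real ((s+Suc d) choose s) * y^s * (1-y)^(Suc d)"
  proof -
    have "real ((s+2+d) choose (s+1)) * (real (s+1) * y^s * (1-y)^(Suc d) + (- (real (Suc d) * (1-y)^d)) * y^(s+1))
       = (real ((s+2+d) choose (s+1)) * real (s+1)) * y^s * (1-y)^(Suc d) - (real ((s+2+d) choose (s+1)) * real (Suc d)) * y^(s+1) * (1-y)^d"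
      by (simp add: algebra_simps)
    also have "\<dots> = real (s+2+d) * real ((s+1+d) choose s) * y^s * (1-y)^(Suc d) - real (s+2+d) * real ((s+1+d) choose (s+1)) * y^(s+1) * (1-y)^d"
      by (simp only: b1 b2)
    finally show ?thesis by simp
  qed
  show ?case
    unfolding eq using DERIV_add[OF D IH] unfolding fin .
qed



lemma Beta_nat: "Beta (real s + 1) (real m + 1) = fact s * fact m / fact (s + m + 1)"
proof -
  have a: "Gamma (real s + 1) = fact s" using Gamma_fact[of s, where 'a=real] by (simp add: add.commute)
  have b: "Gamma (real m + 1) = fact m" using Gamma_fact[of m, where 'a=real] by (simp add: add.commute)
  have c: "Gamma (real s + 1 + (real m + 1)) = fact (s + m + 1)"
    using Gamma_fact[of "s+m+1", where 'a=real] by (simp add: add.commute add.left_commute)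
  show ?thesis unfolding Beta_def a b c ..
qed

lemma beta_density_nat:
  assumes "0 < x" "x < 1"
  shows "beta_density (real s + 1) (real m + 1) x = real (s+1+m) * real ((s+m) choose s) * x^s * (1-x)^m"
proof -
  have C: "real ((s+m) choose s) = fact (s+m) / (fact s * fact m)"
    using binomial_fact[of s "s+m", where 'a=real] by simp
  have f: "(fact (s + m + 1) :: real) = real (s+1+m) * fact (s+m)"
    using fact_Suc[of "s+m", where 'a=real] by simp
  have pos: "(fact s :: real) > 0" "(fact m :: real) > 0" by auto
  have "beta_density (real s + 1) (real m + 1) x = x^s * (1-x)^m / (fact s * fact m / fact (s + m + 1))"
    using assms unfolding beta_density_def Beta_nat by (simp add: powr_realpow)
  also have "\<dots> = x^s * (1-x)^m * (real (s+1+m) * (fact (s+m) / (fact s * fact m)))"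
    unfolding f using pos by (simp add: field_simps)
  also have "\<dots> = real (s+1+m) * real ((s+m) choose s) * x^s * (1-x)^m"
    unfolding C by simp
  finally show ?thesis .
qed

lemma beta_density_measurable[measurable]: "beta_density a b \<in> borel_measurable borel"
  unfolding beta_density_def by measurable

lemma beta_density_nonneg: "0 \<le> beta_density (real s + 1) (real m + 1) x"
proof (cases "0 < x \<and> x < 1")
  case True then show ?thesis by (simp add: beta_density_nat)
next
  case False then show ?thesis by (auto simp: beta_density_def)
qed

definition Fbin :: "nat \<Rightarrow> nat \<Rightarrow> real \<Rightarrow> real" where
  "Fbin s m y = (\<Sum>k\<in>{s+1..s+1+m}. real ((s+1+m) choose k) * y^k * (1-y)^(s+1+m-k))"

lemma beta_cdf:
  assumes y: "0 \<le> y" "y \<le> 1"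
  shows "emeasure (beta_measure (real s + 1) (real m + 1)) {..y} = ennreal (Fbin s m y)"
proof -
  define g where "g x = real (s+1+m) * real ((s+m) choose s) * x^s * (1-x)^m" for x
  have gnn: "0 \<le> g x" if "x \<in> {0..y}" for x using that y unfolding g_def by auto
  have der: "((Fbin s m) has_real_derivative g x) (at x)" for x
    unfolding Fbin_def g_def using F_deriv[of s m x] by (simp add: add.commute add.left_commute)
  have int: "(g has_integral (Fbin s m y - Fbin s m 0)) {0..y}"
    by (rule fundamental_theorem_of_calculus)
       (use y der in \<open>auto simp: has_real_derivative_iff_has_vector_derivative[symmetric]
          intro: has_field_derivative_at_within\<close>)
  have F0: "Fbin s m 0 = 0" unfolding Fbin_def by (intro sum.neutral) auto
  have "emeasure (beta_measure (real s + 1) (real m + 1)) {..y}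
      = (\<integral>\<^sup>+x. ennreal (beta_density (real s + 1) (real m + 1) x) * indicator {..y} x \<partial>lborel)"
    unfolding beta_measure_def by (subst emeasure_density) auto
  also have "\<dots> = (\<integral>\<^sup>+x. indicator {0..y} x * ennreal (g x) \<partial>lborel)"
  proof (rule nn_integral_cong_AE)
    have "AE x in lborel. x \<noteq> 0" "AE x in lborel. x \<noteq> 1" by (rule AE_lborel_singleton)+
    then show "AE x in lborel. ennreal (beta_density (real s + 1) (real m + 1) x) * indicator {..y} x
        = indicator {0..y} x * ennreal (g x)"
    proof eventually_elim
      case (elim x)
      show ?case
      proof (cases "0 < x \<and> x < 1")
        case True then show ?thesis using elim by (auto simp: beta_density_nat g_def indicator_def)
      next
        case False then show ?thesis using elim y by (auto simp: beta_density_def indicator_def)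
      qed
    qed
  qed
  also have "\<dots> = (\<integral>\<^sup>+x. ennreal (indicator {0..y} x * g x) \<partial>lborel)"
    by (intro nn_integral_cong) (auto simp: indicator_def)
  also have "\<dots> = ennreal (Fbin s m y)"
    using nn_integral_has_integral_lebesgue[OF gnn int] F0 by simp
  finally show ?thesis .
qed



lemma Fbin_1: "Fbin s m 1 = 1"
proof -
  have "Fbin s m 1 = (\<Sum>k\<in>{s+1..s+1+m}. if k = s+1+m then 1 else 0)"
    unfolding Fbin_def by (intro sum.cong) auto
  also have "\<dots> = 1" by simp
  finally show ?thesis .
qed

lemma sets_beta_measure[simp, measurable_cong]: "sets (beta_measure a b) = sets borel"
  by (simp add: beta_measure_def)

lemma space_beta_measure[simp]: "space (beta_measure a b) = UNIV"
  by (simp add: beta_measure_def)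

lemma beta_dens_enn[measurable]: "(\<lambda>x. ennreal (beta_density a b x)) \<in> borel_measurable lborel"
  using measurable_compose[OF beta_density_measurable measurable_ennreal, of a b]
  by (simp add: measurable_lborel1 o_def)

lemma prob_space_beta: "prob_space (beta_measure (real s + 1) (real m + 1))"
proof
  have "emeasure (beta_measure (real s + 1) (real m + 1)) UNIV
      = (\<integral>\<^sup>+x. ennreal (beta_density (real s + 1) (real m + 1) x) * indicator UNIV x \<partial>lborel)"
    unfolding beta_measure_def by (subst emeasure_density) (simp_all add: beta_dens_enn)
  also have "\<dots> = (\<integral>\<^sup>+x. ennreal (beta_density (real s + 1) (real m + 1) x) * indicator {..1} x \<partial>lborel)"
    by (intro nn_integral_cong) (auto simp: beta_density_def indicator_def)
  also have "\<dots> = emeasure (beta_measure (real s + 1) (real m + 1)) {..1}"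
    unfolding beta_measure_def by (subst emeasure_density) (simp_all add: beta_dens_enn)
  also have "\<dots> = 1" using beta_cdf[of 1 s m] Fbin_1 by simp
  finally show "emeasure (beta_measure (real s + 1) (real m + 1)) (space (beta_measure (real s + 1) (real m + 1))) = 1"
    by simp
qed

lemma Fbin_binomial:
  assumes y: "0 \<le> y" "y \<le> 1"
  shows "Fbin s m y = measure_pmf.prob (binomial_pmf (s+1+m) y) {k. s+1 \<le> k}"
proof -
  let ?p = "binomial_pmf (s+1+m) y"
  have sub: "set_pmf ?p \<subseteq> {..s+1+m}" using y by (auto simp: set_pmf_binomial_eq split: if_splits)
  have "measure_pmf.prob ?p {k. s+1 \<le> k} = measure_pmf.prob ?p ({k. s+1 \<le> k} \<inter> set_pmf ?p)"
    by (simp add: measure_Int_set_pmf)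
  also have "{k. s+1 \<le> k} \<inter> set_pmf ?p = {s+1..s+1+m} \<inter> set_pmf ?p" using sub by auto
  also have "measure_pmf.prob ?p \<dots> = measure_pmf.prob ?p {s+1..s+1+m}"
    by (simp add: measure_Int_set_pmf)
  also have "\<dots> = Fbin s m y"
    using y by (simp add: measure_measure_pmf_finite Fbin_def)
  finally show ?thesis ..
qed

lemma beta_lower_tail:
  assumes y: "0 \<le> y" "y \<le> 1" and e: "0 \<le> e" and h: "real s + 1 \<ge> real (s+1+m) * y + e"
  shows "measure (beta_measure (real s + 1) (real m + 1)) {..y} \<le> exp (-2 * e\<^sup>2 / real (s+1+m))"
proof -
  interpret binomial_distribution "s+1+m" y by standard (use y in auto)
  have "measure (beta_measure (real s + 1) (real m + 1)) {..y} = Fbin s m y"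
    using beta_cdf[OF y, of s m] by (simp add: measure_def Fbin_binomial[OF y])
  also have "\<dots> = measure_pmf.prob (binomial_pmf (s+1+m) y) {k. s+1 \<le> k}"
    by (rule Fbin_binomial[OF y])
  also have "\<dots> \<le> measure_pmf.prob (binomial_pmf (s+1+m) y) {k. real k \<ge> real (s+1+m) * y + e}"
    using h by (intro measure_pmf.finite_measure_mono) auto
  also have "\<dots> \<le> exp (-2 * e\<^sup>2 / real (s+1+m))"
    by (rule prob_ge) (use e in auto)
  finally show ?thesis .
qed

lemma beta_upper_tail:
  assumes y: "0 \<le> y" "y \<le> 1" and e: "0 \<le> e" and h: "real s \<le> real (s+1+m) * y - e"
  shows "measure (beta_measure (real s + 1) (real m + 1)) {x. y < x} \<le> exp (-2 * e\<^sup>2 / real (s+1+m))"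
proof -
  interpret binomial_distribution "s+1+m" y by standard (use y in auto)
  interpret B: prob_space "beta_measure (real s + 1) (real m + 1)" by (rule prob_space_beta)
  have "measure (beta_measure (real s + 1) (real m + 1)) {x. y < x}
      = 1 - measure (beta_measure (real s + 1) (real m + 1)) {..y}"
    using B.prob_compl[of "{..y}"] by (simp add: Compl_eq_Diff_UNIV[symmetric] not_le) (metis greaterThan_def)
  also have "measure (beta_measure (real s + 1) (real m + 1)) {..y} = Fbin s m y"
    using beta_cdf[OF y, of s m] Fbin_binomial[OF y] by (simp add: measure_def)
  also have "\<dots> = measure_pmf.prob (binomial_pmf (s+1+m) y) {k. s+1 \<le> k}"
    by (rule Fbin_binomial[OF y])
  also have "1 - \<dots> = measure_pmf.prob (binomial_pmf (s+1+m) y) {k. k \<le> s}"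
  proof -
    have e: "{k::nat. k \<le> s} = UNIV - {k. s+1 \<le> k}" by auto
    show ?thesis unfolding e
      using measure_pmf.prob_compl[of "{k. s+1 \<le> k}" "binomial_pmf (s+1+m) y"] by simp
  qed
  also have "\<dots> \<le> measure_pmf.prob (binomial_pmf (s+1+m) y) {k. real k \<le> real (s+1+m) * y - e}"
    using h by (intro measure_pmf.finite_measure_mono) auto
  also have "\<dots> \<le> exp (-2 * e\<^sup>2 / real (s+1+m))"
    by (rule prob_le) (use e in auto)
  finally show ?thesis .
qed



context
begin
interpretation pmf_as_function .
lemma pmf_bernoulli_gen: "pmf (bernoulli_pmf p) b = (if b then max 0 (min 1 p) else 1 - max 0 (min 1 p))"
  by transfer auto
end

lemma bernoulli_measurable:
  assumes "sets D = sets borel"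
  shows "(\<lambda>r. measure_pmf (bernoulli_pmf r)) \<in> D \<rightarrow>\<^sub>M prob_algebra (count_space UNIV)"
proof (rule measurable_prob_algebraI)
  show "prob_space (measure_pmf (bernoulli_pmf r))" for r by (rule prob_space_measure_pmf)
  show "(\<lambda>r. measure_pmf (bernoulli_pmf r)) \<in> D \<rightarrow>\<^sub>M subprob_algebra (count_space UNIV)"
  proof (rule measurable_subprob_algebra)
    show "subprob_space (measure_pmf (bernoulli_pmf r))" for r
      by (simp add: prob_space_imp_subprob_space prob_space_measure_pmf)
    show "sets (measure_pmf (bernoulli_pmf r)) = sets (count_space UNIV)" for r by simp
    fix A :: "bool set"
    have "(\<lambda>r. emeasure (measure_pmf (bernoulli_pmf r)) A) = (\<lambda>r. ennreal (\<Sum>b\<in>A. pmf (bernoulli_pmf r) b))"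
      by (intro ext emeasure_measure_pmf_finite) auto
    also have "\<dots> \<in> borel_measurable D"
    proof -
      have "(\<lambda>r. (\<Sum>b\<in>A. if b then max 0 (min 1 r) else 1 - max 0 (min 1 (r::real)))) \<in> borel_measurable borel"
        by (intro borel_measurable_sum) (auto split: if_splits)
      then have meas: "(\<lambda>r. ennreal (\<Sum>b\<in>A. if b then max 0 (min 1 r) else 1 - max 0 (min 1 (r::real)))) \<in> borel_measurable borel"
        by measurable
      have eq: "borel_measurable D = borel_measurable borel" by (rule measurable_cong_sets[OF assms refl])
      show ?thesis using meas unfolding pmf_bernoulli_gen eq .
    qed
    finally show "(\<lambda>r. emeasure (measure_pmf (bernoulli_pmf r)) A) \<in> borel_measurable D" .
  qed
qed

locale arm =
  fixes D :: "real measure"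
  assumes ps: "prob_space D" and sb: "sets D = sets borel" and supp: "AE x in D. 0 \<le> x \<and> x \<le> 1"
begin

interpretation D: prob_space D by (rule ps)

lemma D_prob_alg: "D \<in> space (prob_algebra D)"
  using ps by (simp add: space_prob_algebra)

lemma Bm: "(\<lambda>r. measure_pmf (bernoulli_pmf r)) \<in> D \<rightarrow>\<^sub>M prob_algebra (count_space UNIV)"
  by (rule bernoulli_measurable[OF sb])

lemma prob_space_trial: "prob_space (trial D)"
  unfolding trial_def by (rule prob_space_bind'[OF D_prob_alg Bm])

lemma sets_trial: "sets (trial D) = sets (count_space UNIV)"
  unfolding trial_def by (rule sets_bind'[OF D_prob_alg Bm])

lemma integrable_id: "integrable D (\<lambda>x. x)"
proof (rule D.integrable_const_bound[where B=1])
  show "AE x in D. norm x \<le> 1" by (rule eventually_mono[OF supp]) auto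
  have eq: "borel_measurable D = borel_measurable borel" by (rule measurable_cong_sets[OF sb refl])
  show "(\<lambda>x. x) \<in> borel_measurable D" unfolding eq by simp
qed

lemma mean_bounds: "0 \<le> (\<integral>x. x \<partial>D)" "(\<integral>x. x \<partial>D) \<le> 1"
proof -
  show "0 \<le> (\<integral>x. x \<partial>D)" by (rule integral_nonneg_AE) (use supp in \<open>auto elim: eventually_mono\<close>)
  have "(\<integral>x. x \<partial>D) \<le> (\<integral>x. 1 \<partial>D)"
    by (rule integral_mono_AE[OF integrable_id]) (use supp in \<open>auto elim: eventually_mono\<close>)
  then show "(\<integral>x. x \<partial>D) \<le> 1" by (simp add: D.prob_space)
qed

lemma trial_True: "measure (trial D) {True} = (\<integral>x. x \<partial>D)"
proof -
  have "emeasure (trial D) {True} = (\<integral>\<^sup>+r. emeasure (measure_pmf (bernoulli_pmf r)) {True} \<partial>D)"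
    unfolding trial_def by (rule emeasure_bind_prob_algebra[OF D_prob_alg Bm]) auto
  also have "\<dots> = (\<integral>\<^sup>+r. ennreal r \<partial>D)"
    by (intro nn_integral_cong_AE eventually_mono[OF supp]) (simp add: emeasure_pmf_single)
  also have "\<dots> = ennreal (\<integral>x. x \<partial>D)"
    by (rule nn_integral_eq_integral[OF integrable_id]) (use supp in \<open>auto elim: eventually_mono\<close>)
  finally show ?thesis using mean_bounds by (simp add: measure_def)
qed

end



context arm
begin

definition M :: "nat \<Rightarrow> (nat \<Rightarrow> bool) measure" where "M n = PiM {..<n} (\<lambda>_. trial D)"
interpretation T: prob_space "trial D" by (rule prob_space_trial)

lemma trial_meas_borel: "(f :: bool \<Rightarrow> real) \<in> borel_measurable (trial D)"
proof -
  have eq: "borel_measurable (trial D) = borel_measurable (count_space UNIV)"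
    by (rule measurable_cong_sets[OF sets_trial refl])
  show ?thesis unfolding eq by simp
qed

definition X :: "nat \<Rightarrow> (nat \<Rightarrow> bool) \<Rightarrow> real" where "X t \<omega> = (if \<omega> t then 1 else (0::real))"

lemma prob_space_M: "prob_space (M n)"
  unfolding M_def by (intro prob_space_PiM prob_space_trial)

lemma X_meas[measurable]: "t < n \<Longrightarrow> X t \<in> borel_measurable (M n)"
proof -
  assume t: "t < n"
  have c: "(\<lambda>\<omega>. \<omega> t) \<in> M n \<rightarrow>\<^sub>M trial D"
    unfolding M_def using t by (intro measurable_component_singleton) auto
  have "(\<lambda>b::bool. if b then 1 else (0::real)) \<in> trial D \<rightarrow>\<^sub>M borel"
    by (rule trial_meas_borel)
  from measurable_compose[OF c this] show ?thesis unfolding X_def[abs_def] by simp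
qed

lemma comp_meas: "t < n \<Longrightarrow> (\<lambda>\<omega>. \<omega> t) \<in> M n \<rightarrow>\<^sub>M trial D"
  unfolding M_def by (intro measurable_component_singleton) auto

lemma card_sum: "real (card {t \<in> {..<n}. \<omega> t}) = (\<Sum>t<n. X t \<omega>)"
proof -
  have "(\<Sum>t<n. X t \<omega>) = (\<Sum>t\<in>{t \<in> {..<n}. \<omega> t}. 1)"
    unfolding X_def by (intro sum.mono_neutral_cong_right) auto
  thus ?thesis by simp
qed

lemma cnt_meas: "(\<lambda>\<omega>. card {t \<in> {..<n}. \<omega> t}) \<in> M n \<rightarrow>\<^sub>M count_space UNIV"
proof (subst measurable_count_space_eq2_countable, intro conjI ballI)
  show "(\<lambda>\<omega>. card {t \<in> {..<n}. \<omega> t}) \<in> space (M n) \<rightarrow> UNIV" by simp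
  fix a :: nat
  have "(\<lambda>\<omega>. card {t \<in> {..<n}. \<omega> t}) -` {a} \<inter> space (M n) = {\<omega> \<in> space (M n). (\<Sum>t<n. X t (\<omega>::nat\<Rightarrow>bool)) = real a}"
    by (auto simp flip: card_sum)
  also have "\<dots> \<in> sets (M n)" by measurable
  finally show "(\<lambda>\<omega>. card {t \<in> {..<n}. \<omega> t}) -` {a} \<inter> space (M n) \<in> sets (M n)" .
qed

lemma success_count_eq: "measure (success_count D n) A = measure (M n) {\<omega> \<in> space (M n). card {t \<in> {..<n}. \<omega> t} \<in> A}"
  unfolding success_count_def M_def[symmetric]
  by (subst measure_distr[OF cnt_meas]) (auto simp: vimage_def Int_def conj_commute)

lemma indep_coords:
  assumes n: "n > 0"
  shows "prob_space.indep_vars (M n) (\<lambda>_. trial D) (\<lambda>t \<omega>. \<omega> t) {..<n}"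
proof -
  interpret P: prob_space "M n" by (rule prob_space_M)
  have rv: "(\<lambda>\<omega>::nat\<Rightarrow>bool. \<omega> t) \<in> M n \<rightarrow>\<^sub>M trial D" if "t \<in> {..<n}" for t
    using that comp_meas by auto
  show ?thesis
  proof (subst P.indep_vars_iff_distr_eq_PiM'[OF _ rv])
    show "{..<n} \<noteq> {}" using n by auto
    have "distr (M n) (PiM {..<n} (\<lambda>_. trial D)) (\<lambda>x. \<lambda>i\<in>{..<n}. x i) = distr (M n) (M n) (\<lambda>x. x)"
      by (intro distr_cong) (auto simp: M_def space_PiM PiE_def extensional_def restrict_def fun_eq_iff)
    also have "\<dots> = M n" by (rule distr_id)
    also have "\<dots> = PiM {..<n} (\<lambda>i. distr (M n) (trial D) (\<lambda>x. x i))"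
      unfolding M_def by (intro PiM_cong refl distr_PiM_component[symmetric] prob_space_trial) auto
    finally show "distr (M n) (PiM {..<n} (\<lambda>_. trial D)) (\<lambda>x. \<lambda>i\<in>{..<n}. x i) = PiM {..<n} (\<lambda>i. distr (M n) (trial D) (\<lambda>x. x i))" .
  qed auto
qed

lemma expect_X:
  assumes t: "t < n"
  shows "prob_space.expectation (M n) (X t) = (\<integral>x. x \<partial>D)"
proof -
  have c: "(\<lambda>\<omega>. \<omega> t) \<in> M n \<rightarrow>\<^sub>M trial D"
    unfolding M_def using t by (intro measurable_component_singleton) auto
  have f: "(\<lambda>b::bool. if b then 1 else (0::real)) \<in> trial D \<rightarrow>\<^sub>M borel"
    by (rule trial_meas_borel)
  have "prob_space.expectation (M n) (X t) = (\<integral>b. (if b then 1 else (0::real)) \<partial>distr (M n) (trial D) (\<lambda>\<omega>. \<omega> t))"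
    unfolding X_def[abs_def] by (subst integral_distr[OF c f]) simp
  also have "distr (M n) (trial D) (\<lambda>\<omega>. \<omega> t) = trial D"
    unfolding M_def using t by (intro distr_PiM_component prob_space_trial) auto
  also have "(\<integral>b. (if b then 1 else (0::real)) \<partial>trial D) = (\<integral>b. indicator {True} b \<partial>trial D)"
    by (intro Bochner_Integration.integral_cong) (auto simp: indicator_def)
  also have "\<dots> = measure (trial D) {True}"
    using sets_eq_imp_space_eq[OF sets_trial] by simp
  finally show ?thesis using trial_True by simp
qed

lemma hoeff:
  assumes n: "n > 0" and e: "e \<ge> 0"
  shows "measure (success_count D n) {k. real k \<le> real n * (\<integral>x. x \<partial>D) - e} \<le> exp (-2 * e\<^sup>2 / real n)"
    and "measure (success_count D n) {k. real k \<ge> real n * (\<integral>x. x \<partial>D) + e} \<le> exp (-2 * e\<^sup>2 / real n)"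
proof -
  interpret P: prob_space "M n" by (rule prob_space_M)
  interpret H: Hoeffding_ineq "M n" "{..<n}" X "\<lambda>_. 0" "\<lambda>_. 1" "real n * (\<integral>x. x \<partial>D)"
  proof unfold_locales
    show "finite {..<n}" by simp
    show "P.indep_vars (\<lambda>_. borel) X {..<n}"
      unfolding X_def[abs_def]
      by (rule P.indep_vars_compose2[OF indep_coords[OF n]])
         (rule trial_meas_borel)
    show "AE x in M n. X i x \<in> {0..1}" for i by (auto simp: X_def)
    show "real n * (\<integral>x. x \<partial>D) \<equiv> (\<Sum>i<n. P.expectation (X i))"
      by (simp add: expect_X)
  qed
  have pos: "(\<Sum>i<n. (1 - 0)\<^sup>2) > (0::real)" using n by simp
  show "measure (success_count D n) {k. real k \<le> real n * (\<integral>x. x \<partial>D) - e} \<le> exp (-2 * e\<^sup>2 / real n)"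
    unfolding success_count_eq mem_Collect_eq card_sum using H.Hoeffding_ineq_le[OF e pos] by simp
  show "measure (success_count D n) {k. real k \<ge> real n * (\<integral>x. x \<partial>D) + e} \<le> exp (-2 * e\<^sup>2 / real n)"
    unfolding success_count_eq mem_Collect_eq card_sum using H.Hoeffding_ineq_ge[OF e pos] by simp
qed

end



lemma beta_kernel: "(\<lambda>s. beta_measure (real s + 1) (real (n - s) + 1)) \<in> count_space UNIV \<rightarrow>\<^sub>M prob_algebra borel"
  by (auto simp: measurable_count_space_eq1 space_prob_algebra prob_space_beta)

context arm
begin

lemma sc_alt: "success_count D n = distr (M n) (count_space UNIV) (\<lambda>\<omega>. card {t \<in> {..<n}. \<omega> t})"
  unfolding success_count_def M_def ..

lemma sc_prob: "success_count D n \<in> space (prob_algebra (count_space UNIV))"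
  unfolding sc_alt space_prob_algebra
  using prob_space.prob_space_distr[OF prob_space_M cnt_meas] by simp

lemma ts_prob: "prob_space (ts_sample D n)"
  unfolding ts_sample_def by (rule prob_space_bind'[OF sc_prob beta_kernel])

lemma ts_sets: "sets (ts_sample D n) = sets borel"
  unfolding ts_sample_def by (rule sets_bind'[OF sc_prob beta_kernel])

lemma sc_prob_space: "prob_space (success_count D n)"
  using sc_prob by (simp add: space_prob_algebra)

lemma ts_bound:
  assumes A: "A \<in> sets borel" and B: "B \<ge> 0"
    and h: "\<And>s. s \<le> n \<Longrightarrow> \<not> P s \<Longrightarrow> measure (beta_measure (real s + 1) (real (n - s) + 1)) A \<le> B"
  shows "measure (ts_sample D n) A \<le> measure (success_count D n) {s. P s} + B"
proof -
  interpret S: prob_space "success_count D n" by (rule sc_prob_space)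
  interpret TS: prob_space "ts_sample D n" by (rule ts_prob)
  let ?Q = "{s. P s \<or> n < s}"
  have "emeasure (ts_sample D n) A = (\<integral>\<^sup>+s. emeasure (beta_measure (real s + 1) (real (n - s) + 1)) A \<partial>success_count D n)"
    unfolding ts_sample_def by (rule emeasure_bind_prob_algebra[OF sc_prob beta_kernel A])
  also have "\<dots> \<le> (\<integral>\<^sup>+s. (indicator ?Q s + ennreal B) \<partial>success_count D n)"
  proof (intro nn_integral_mono)
    fix s
    interpret Bt: prob_space "beta_measure (real s + 1) (real (n - s) + 1)" by (rule prob_space_beta)
    show "emeasure (beta_measure (real s + 1) (real (n - s) + 1)) A \<le> indicator ?Q s + ennreal B"
    proof (cases "s \<in> ?Q")
      case True
      have "emeasure (beta_measure (real s + 1) (real (n - s) + 1)) A \<le> 1" by (rule Bt.emeasure_le_1)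
      also have "\<dots> \<le> indicator ?Q s + ennreal B" using True by simp
      finally show ?thesis .
    next
      case False
      have "emeasure (beta_measure (real s + 1) (real (n - s) + 1)) A = ennreal (measure (beta_measure (real s + 1) (real (n - s) + 1)) A)"
        by (rule Bt.emeasure_eq_measure)
      also have "\<dots> \<le> ennreal B" using h[of s] False by (auto intro: ennreal_leI)
      also have "\<dots> \<le> indicator ?Q s + ennreal B" by simp
      finally show ?thesis .
    qed
  qed
  also have "\<dots> = (\<integral>\<^sup>+s. indicator ?Q s \<partial>success_count D n) + (\<integral>\<^sup>+s. ennreal B \<partial>success_count D n)"
  proof (rule nn_integral_add)
    have sS: "sets (success_count D n) = sets (count_space UNIV)" using sc_prob by (simp add: space_prob_algebra)
    have eq: "borel_measurable (success_count D n) = borel_measurable (count_space UNIV)"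
      by (rule measurable_cong_sets[OF sS refl])
    show "(\<lambda>s. indicator ?Q s) \<in> borel_measurable (success_count D n)" unfolding eq by simp
    show "(\<lambda>s. ennreal B) \<in> borel_measurable (success_count D n)" by simp
  qed
  also have "\<dots> = emeasure (success_count D n) ?Q + ennreal B"
  proof -
    have sS: "sets (success_count D n) = sets (count_space UNIV)" using sc_prob by (simp add: space_prob_algebra)
    have "(\<integral>\<^sup>+s. indicator ?Q s \<partial>success_count D n) = emeasure (success_count D n) ?Q"
      by (rule nn_integral_indicator) (simp add: sS)
    moreover have "(\<integral>\<^sup>+s. ennreal B \<partial>success_count D n) = ennreal B"
      by (simp add: S.emeasure_space_1)
    ultimately show ?thesis by simp
  qed
  also have "emeasure (success_count D n) ?Q = ennreal (measure (success_count D n) {s. P s})"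
  proof -
    have "measure (success_count D n) ?Q = measure (success_count D n) {s. P s}"
    proof -
      have le: "card {t \<in> {..<n}. \<omega> t} \<le> n" for \<omega> :: "nat \<Rightarrow> bool"
        using card_mono[of "{..<n}" "{t \<in> {..<n}. \<omega> t}"] by auto
      show ?thesis unfolding success_count_eq using le by (metis (no_types, lifting) not_le mem_Collect_eq)
    qed
    then show ?thesis by (simp add: S.emeasure_eq_measure)
  qed
  finally have 1: "ennreal (measure (ts_sample D n) A) \<le> ennreal (measure (success_count D n) {s. P s}) + ennreal B"
    by (simp add: TS.emeasure_eq_measure)
  have "ennreal (measure (success_count D n) {s. P s}) + ennreal B = ennreal (measure (success_count D n) {s. P s} + B)"
    using B by (simp add: ennreal_plus)
  with 1 have "ennreal (measure (ts_sample D n) A) \<le> ennreal (measure (success_count D n) {s. P s} + B)" by simp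
  then show ?thesis using B by (subst (asm) ennreal_le_iff) auto
qed

lemma exp_mono_aux:
  fixes n :: nat and \<Delta> L :: real
  assumes "L \<le> real n * \<Delta>\<^sup>2 / 8" "\<Delta> > 0"
  shows "exp (-2 * ((real n + 2) * \<Delta> / 4)\<^sup>2 / real (n + 1)) \<le> exp (- L)"
proof -
  have "real n * (real n + 1) \<le> (real n + 2)^2" by (simp add: power2_eq_square algebra_simps)
  then have "real n * (real n + 1) * \<Delta>\<^sup>2 \<le> (real n + 2)^2 * \<Delta>\<^sup>2" by (rule mult_right_mono) simp
  then have "real n * \<Delta>\<^sup>2 / 8 \<le> 2 * ((real n + 2) * \<Delta> / 4)\<^sup>2 / real (n + 1)"
    by (simp add: field_simps power2_eq_square)
  then show ?thesis using assms by simp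
qed

lemma lower_arm:
  assumes n: "n > 0" and \<Delta>: "\<Delta> > 0" and c: "0 \<le> c" "c \<le> (\<integral>x. x \<partial>D) - \<Delta>/2"
    and L: "L \<le> real n * \<Delta>\<^sup>2 / 8"
  shows "measure (ts_sample D n) {..c} \<le> 2 * exp (- L)"
proof -
  define p where "p = (\<integral>x. x \<partial>D)"
  have p: "0 \<le> p" "p \<le> 1" using mean_bounds by (auto simp: p_def)
  have "measure (ts_sample D n) {..c} \<le> measure (success_count D n) {s. real s \<le> real n * p - real n * \<Delta> / 4} + exp (- L)"
  proof (rule ts_bound)
    fix s assume s: "s \<le> n" and nP: "\<not> real s \<le> real n * p - real n * \<Delta> / 4"
    have N: "s + 1 + (n - s) = n + 1" using s by simp
    have "measure (beta_measure (real s + 1) (real (n - s) + 1)) {..c} \<le> exp (-2 * ((real n + 2) * \<Delta> / 4)\<^sup>2 / real (s + 1 + (n - s)))"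
    proof (rule beta_lower_tail)
      show "0 \<le> c" "c \<le> 1" using c p \<Delta> by (auto simp: p_def)
      show "0 \<le> (real n + 2) * \<Delta> / 4" using \<Delta> by simp
      have m: "real (s + 1 + (n - s)) * c \<le> (real n + 1) * (p - \<Delta>/2)"
        using mult_left_mono[OF c(2), of "real n + 1"] N by (simp add: p_def add.commute)
      have "real (s + 1 + (n - s)) * c + (real n + 2) * \<Delta> / 4 \<le> (real n + 1) * (p - \<Delta>/2) + (real n + 2) * \<Delta> / 4"
        using m by (rule add_right_mono)
      also have "\<dots> = real n * p - real n * \<Delta> / 4 + p" by (simp add: field_simps)
      also have "\<dots> \<le> real s + 1" using nP p by simp
      finally show "real s + 1 \<ge> real (s + 1 + (n - s)) * c + (real n + 2) * \<Delta> / 4" .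
    qed
    also have "\<dots> \<le> exp (- L)" unfolding N by (rule exp_mono_aux[OF L \<Delta>])
    finally show "measure (beta_measure (real s + 1) (real (n - s) + 1)) {..c} \<le> exp (- L)" .
  qed auto
  also have "measure (success_count D n) {s. real s \<le> real n * p - real n * \<Delta> / 4} \<le> exp (-2 * (real n * \<Delta> / 4)\<^sup>2 / real n)"
    unfolding p_def by (rule hoeff(1)[OF n]) (use \<Delta> in simp)
  also have "exp (-2 * (real n * \<Delta> / 4)\<^sup>2 / real n) = exp (- (real n * \<Delta>\<^sup>2 / 8))"
    using n by (simp add: power2_eq_square field_simps)
  also have "\<dots> \<le> exp (- L)" using L by simp
  finally show ?thesis by simp
qed

lemma upper_arm:
  assumes n: "n > 0" and \<Delta>: "\<Delta> > 0" and c: "c \<le> 1" "(\<integral>x. x \<partial>D) + \<Delta>/2 \<le> c"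
    and L: "L \<le> real n * \<Delta>\<^sup>2 / 8"
  shows "measure (ts_sample D n) {x. c < x} \<le> 2 * exp (- L)"
proof -
  define p where "p = (\<integral>x. x \<partial>D)"
  have p: "0 \<le> p" "p \<le> 1" using mean_bounds by (auto simp: p_def)
  have "measure (ts_sample D n) {x. c < x} \<le> measure (success_count D n) {s. real s \<ge> real n * p + real n * \<Delta> / 4} + exp (- L)"
  proof (rule ts_bound)
    fix s assume s: "s \<le> n" and nP: "\<not> real s \<ge> real n * p + real n * \<Delta> / 4"
    have N: "s + 1 + (n - s) = n + 1" using s by simp
    have "measure (beta_measure (real s + 1) (real (n - s) + 1)) {x. c < x} \<le> exp (-2 * ((real n + 2) * \<Delta> / 4)\<^sup>2 / real (s + 1 + (n - s)))"
    proof (rule beta_upper_tail)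
      show "0 \<le> c" "c \<le> 1" using c p \<Delta> by (auto simp: p_def)
      show "0 \<le> (real n + 2) * \<Delta> / 4" using \<Delta> by simp
      have "real s \<le> real n * p + real n * \<Delta> / 4" using nP by simp
      also have "\<dots> \<le> real n * p + real n * \<Delta> / 4 + p" using p by simp
      also have "\<dots> = (real n + 1) * (p + \<Delta>/2) - (real n + 2) * \<Delta> / 4" by (simp add: field_simps)
      also have "\<dots> \<le> real (s + 1 + (n - s)) * c - (real n + 2) * \<Delta> / 4"
      proof -
        have "(real n + 1) * (p + \<Delta>/2) \<le> real (s + 1 + (n - s)) * c"
          using mult_left_mono[OF c(2), of "real n + 1"] N by (simp add: p_def add.commute)
        then show ?thesis by (rule diff_right_mono)
      qed
      finally show "real s \<le> real (s + 1 + (n - s)) * c - (real n + 2) * \<Delta> / 4" .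
    qed
    also have "\<dots> \<le> exp (- L)" unfolding N by (rule exp_mono_aux[OF L \<Delta>])
    finally show "measure (beta_measure (real s + 1) (real (n - s) + 1)) {x. c < x} \<le> exp (- L)" .
  qed auto
  also have "measure (success_count D n) {s. real s \<ge> real n * p + real n * \<Delta> / 4} \<le> exp (-2 * (real n * \<Delta> / 4)\<^sup>2 / real n)"
    unfolding p_def by (rule hoeff(2)[OF n]) (use \<Delta> in simp)
  also have "exp (-2 * (real n * \<Delta> / 4)\<^sup>2 / real n) = exp (- (real n * \<Delta>\<^sup>2 / 8))"
    using n by (simp add: power2_eq_square field_simps)
  also have "\<dots> \<le> exp (- L)" using L by simp
  finally show ?thesis by simp
qed

end



lemma marginal:
  assumes ps: "\<And>i. i \<in> I \<Longrightarrow> prob_space (Q i)" and i: "i \<in> I" and A: "A \<in> sets (Q i)"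
  shows "measure (PiM I Q) {\<theta> \<in> space (PiM I Q). \<theta> i \<in> A} = measure (Q i) A"
proof -
  have m: "(\<lambda>\<theta>. \<theta> i) \<in> PiM I Q \<rightarrow>\<^sub>M Q i" using i by (rule measurable_component_singleton)
  have "measure (Q i) A = measure (distr (PiM I Q) (Q i) (\<lambda>\<theta>. \<theta> i)) A"
    using distr_PiM_component[of I Q i] ps i by simp
  also have "\<dots> = measure (PiM I Q) ((\<lambda>\<theta>. \<theta> i) -` A \<inter> space (PiM I Q))"
    by (rule measure_distr[OF m A])
  finally show ?thesis by (simp add: vimage_def Int_def conj_commute)
qed

theorem lemma3:
  fixes N :: nat and D :: "nat \<Rightarrow> real measure" and \<mu> :: "nat \<Rightarrow> real"
    and \<Delta> :: real and \<gamma> l j :: nat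
  assumes arms: "\<And>i. i \<in> {1..N} \<Longrightarrow> prob_space (D i)"
    and borel: "\<And>i. i \<in> {1..N} \<Longrightarrow> sets (D i) = sets borel"
    and support: "\<And>i. i \<in> {1..N} \<Longrightarrow> AE x in D i. 0 \<le> x \<and> x \<le> 1"
    and mean: "\<And>i. i \<in> {1..N} \<Longrightarrow> \<mu> i = (\<integral>x. x \<partial>D i)"
    and N2: "N \<ge> 2"
    and Delta: "\<Delta> = \<mu> 1 - Max (\<mu> ` {2..N})"
    and Delta_pos: "\<Delta> > 0"
    and gamma: "\<gamma> = nat \<lceil>8 / \<Delta>\<^sup>2\<rceil>"
    and l: "l \<ge> 1"
    and j: "j \<in> {2..N}"
  shows "measure (e3ts_thetas N D \<gamma> l)
           {\<theta> \<in> space (e3ts_thetas N D \<gamma> l). \<theta> 1 < \<theta> j} \<le> 4 * exp (- real l)"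
proof -
  have arm: "arm (D i)" if "i \<in> {1..N}" for i
    using arms[OF that] borel[OF that] support[OF that] by (simp add: arm_def)
  have i1: "1 \<in> {1..N}" and j1: "j \<in> {1..N}" using N2 j by auto
  have mu1: "0 \<le> \<mu> 1" "\<mu> 1 \<le> 1" using arm.mean_bounds[OF arm[OF i1]] mean[OF i1] by auto
  have muj: "0 \<le> \<mu> j" "\<mu> j \<le> 1" using arm.mean_bounds[OF arm[OF j1]] mean[OF j1] by auto
  have "\<mu> j \<le> Max (\<mu> ` {2..N})" using j by (intro Max_ge) auto
  then have gap: "\<mu> j \<le> \<mu> 1 - \<Delta>" using Delta by simp
  define c where "c = \<mu> 1 - \<Delta> / 2"
  define n where "n = \<gamma> * l"
  have g: "real \<gamma> \<ge> 8 / \<Delta>\<^sup>2"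
  proof -
    have "8 / \<Delta>\<^sup>2 \<le> real_of_int \<lceil>8 / \<Delta>\<^sup>2\<rceil>" by (rule le_of_int_ceiling)
    also have "\<dots> = real \<gamma>" using gamma Delta_pos by simp
    finally show ?thesis .
  qed
  have gpos: "\<gamma> > 0"
  proof -
    have "8 / \<Delta>\<^sup>2 > 0" using Delta_pos by simp
    with g show ?thesis by (cases \<gamma>) auto
  qed
  have npos: "n > 0" using gpos l by (simp add: n_def)
  have L: "real l \<le> real n * \<Delta>\<^sup>2 / 8"
  proof -
    have "real l = (8 / \<Delta>\<^sup>2) * real l * \<Delta>\<^sup>2 / 8" using Delta_pos by (simp add: field_simps)
    also have "\<dots> \<le> real \<gamma> * real l * \<Delta>\<^sup>2 / 8"
      using g by (intro divide_right_mono mult_right_mono) auto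
    also have "\<dots> = real n * \<Delta>\<^sup>2 / 8" by (simp add: n_def)
    finally show ?thesis .
  qed
  have b1: "measure (ts_sample (D 1) n) {..c} \<le> 2 * exp (- real l)"
    by (rule arm.lower_arm[OF arm[OF i1] npos Delta_pos _ _ L])
       (use mu1 muj gap mean[OF i1] Delta_pos in \<open>auto simp: c_def\<close>)
  have b2: "measure (ts_sample (D j) n) {x. c < x} \<le> 2 * exp (- real l)"
    by (rule arm.upper_arm[OF arm[OF j1] npos Delta_pos _ _ L])
       (use mu1 muj gap mean[OF j1] Delta_pos in \<open>auto simp: c_def\<close>)
  let ?P = "e3ts_thetas N D \<gamma> l"
  have P: "?P = PiM {1..N} (\<lambda>i. ts_sample (D i) n)" by (simp add: e3ts_thetas_def n_def)
  have ps: "\<And>i. i \<in> {1..N} \<Longrightarrow> prob_space (ts_sample (D i) n)" using arm arm.ts_prob by blast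
  interpret PP: prob_space ?P unfolding P by (intro prob_space_PiM ps)
  have s1: "sets (ts_sample (D 1) n) = sets borel" by (rule arm.ts_sets[OF arm[OF i1]])
  have sj: "sets (ts_sample (D j) n) = sets borel" by (rule arm.ts_sets[OF arm[OF j1]])
  have A1: "{..c} \<in> sets (ts_sample (D 1) n)" unfolding s1 by (rule atMost_borel)
  have Aj: "{x. c < x} \<in> sets (ts_sample (D j) n)" unfolding sj by (rule greaterThan_borel[unfolded greaterThan_def])
  have m1: "measure ?P {\<theta> \<in> space ?P. \<theta> 1 \<in> {..c}} = measure (ts_sample (D 1) n) {..c}"
    unfolding P using marginal[where I="{1..N}" and Q="\<lambda>i. ts_sample (D i) n" and i=1 and A="{..c}", OF ps i1 A1] by simp
  have m2: "measure ?P {\<theta> \<in> space ?P. \<theta> j \<in> {x. c < x}} = measure (ts_sample (D j) n) {x. c < x}"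
    unfolding P using marginal[where I="{1..N}" and Q="\<lambda>i. ts_sample (D i) n" and i=j and A="{x. c < x}", OF ps j1 Aj] by simp
  have meas1: "{\<theta> \<in> space ?P. \<theta> 1 \<in> {..c}} \<in> sets ?P"
  proof -
    have "(\<lambda>\<theta>. \<theta> 1) \<in> ?P \<rightarrow>\<^sub>M ts_sample (D 1) n" unfolding P using i1 by (rule measurable_component_singleton)
    moreover note A1
    ultimately show ?thesis using measurable_sets[of "\<lambda>\<theta>. \<theta> 1" ?P "ts_sample (D 1) n" "{..c}"]
      by (simp add: vimage_def Int_def conj_commute)
  qed
  have meas2: "{\<theta> \<in> space ?P. \<theta> j \<in> {x. c < x}} \<in> sets ?P"
  proof -
    have "(\<lambda>\<theta>. \<theta> j) \<in> ?P \<rightarrow>\<^sub>M ts_sample (D j) n" unfolding P using j1 by (rule measurable_component_singleton)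
    moreover note Aj
    ultimately show ?thesis using measurable_sets[of "\<lambda>\<theta>. \<theta> j" ?P "ts_sample (D j) n" "{x. c < x}"]
      by (simp add: vimage_def Int_def conj_commute)
  qed
  have "measure ?P {\<theta> \<in> space ?P. \<theta> 1 < \<theta> j}
      \<le> measure ?P ({\<theta> \<in> space ?P. \<theta> 1 \<in> {..c}} \<union> {\<theta> \<in> space ?P. \<theta> j \<in> {x. c < x}})"
    by (intro PP.finite_measure_mono sets.Un meas1 meas2) auto
  also have "\<dots> \<le> measure ?P {\<theta> \<in> space ?P. \<theta> 1 \<in> {..c}} + measure ?P {\<theta> \<in> space ?P. \<theta> j \<in> {x. c < x}}"
    by (rule measure_Un_le[OF meas1 meas2])
  also have "\<dots> \<le> 2 * exp (- real l) + 2 * exp (- real l)"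
    unfolding m1 m2 using b1 b2 by simp
  finally show ?thesis by simp
qed

end
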